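(* If $(G,u,v)$ is a twice-marked graph of genus $g$ with $k$-general transmission and $k\ge \frac12 g+1$, then $G$ (forgetting the marked points) is Brill–Noether general.
   Context: A graph is a finite, connected, loopless multigraph (parallel edges allowed); its genus is $g=|E(G)|-|V(G)|+1$. A divisor is an element of the free abelian group on $V(G)$. Linear equivalence $\sim$ is generated by chip-firing (firing $w$ subtracts $\mathrm{val}(w)$ chips from $w$ and adds to each other vertex the number of edges joining it to $w$). The rank $r(D)$ is $-1$ if $D$ is not equivalent to an effective divisor, else the largest $r\ge0$ such that $D-E$ is equivalent to an effective divisor for every effective $E$ of degree $r$. $\delta(P)$ is $1$ if $P$ holds and $0$ otherwise. A twice-marked graph $(G,u,v)$ is a graph with two chosen vertices. A twist of $D$ is $D+au+bv$. $\Delta(D)=r(D)-r(D-u)-r(D-v)+r(D-u-v)$. $D$ is submodular if $\Delta(D')\ge0$ for all twists $D'$. If $D$ is submodular, its transmission permutation $\tau^{u,v}_D$ is the unique bijection $\mathbb Z\to\mathbb Z$ with $\delta(\tau^{u,v}_D(b)=a)=\Delta(D+au-bv)$ for all $a,b$. An inversion of a bijection $\tau$ is a pair $(a,b)$ with $a<b$, $\tau(a)>\tau(b)$; two inversions $(a,b),(a',b')$ are $k$-equivalent if $a-a'=b-b'\equiv0\pmod k$; $\mathrm{inv}_k(\tau)$ is the number of classes. A genus-$g$ twice-marked graph has $k$-general transmission if $ku\sim kv$, every divisor is submodular, and $\mathrm{inv}_k(\tau^{u,v}_D)\le g$ for every divisor $D$. A graph $G$ of genus $g$ is Brill–Noether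 general if for every divisor $D$ and every integer $r$ with $0\le r\le r(D)$, $g-(r+1)(g-\deg D+r)\ge0$. *)

theory Defs
  imports Main "HOL-Library.Extended_Nat"
begin

text \<open>A finite, connected, loopless multigraph with vertex set V and edge
multiplicity function m (m x y = number of edges joining x and y).\<close>

definition is_graph :: "'a set \<Rightarrow> ('a \<Rightarrow> 'a \<Rightarrow> nat) \<Rightarrow> bool" where
  "is_graph V m \<longleftrightarrow> finite V \<and> V \<noteq> {}
     \<and> (\<forall>x y. m x y = m y x)
     \<and> (\<forall>x. m x x = 0)
     \<and> (\<forall>x y. m x y > 0 \<longrightarrow> x \<in> V \<and> y \<in> V)
     \<and> (\<forall>x\<in>V. \<forall>y\<in>V. (x, y) \<in> {(a, b). m a b > 0}\<^sup>*)"

definition num_edges :: "'a set \<Rightarrow> ('a \<Rightarrow> 'a \<Rightarrow> nat) \<Rightarrow> int" where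
  "num_edges V m = int ((\<Sum>x\<in>V. \<Sum>y\<in>V. m x y) div 2)"

definition genus :: "'a set \<Rightarrow> ('a \<Rightarrow> 'a \<Rightarrow> nat) \<Rightarrow> int" where
  "genus V m = num_edges V m - int (card V) + 1"

definition valence :: "'a set \<Rightarrow> ('a \<Rightarrow> 'a \<Rightarrow> nat) \<Rightarrow> 'a \<Rightarrow> int" where
  "valence V m x = (\<Sum>y\<in>V. int (m x y))"

definition is_divisor :: "'a set \<Rightarrow> ('a \<Rightarrow> int) \<Rightarrow> bool" where
  "is_divisor V D \<longleftrightarrow> (\<forall>x. x \<notin> V \<longrightarrow> D x = 0)"

definition deg :: "'a set \<Rightarrow> ('a \<Rightarrow> int) \<Rightarrow> int" where
  "deg V D = (\<Sum>x\<in>V. D x)"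

definition effective :: "'a set \<Rightarrow> ('a \<Rightarrow> int) \<Rightarrow> bool" where
  "effective V D \<longleftrightarrow> is_divisor V D \<and> (\<forall>x\<in>V. D x \<ge> 0)"

text \<open>Effect of firing every vertex w exactly f w times (f w may be negative).\<close>
definition fire :: "'a set \<Rightarrow> ('a \<Rightarrow> 'a \<Rightarrow> nat) \<Rightarrow> ('a \<Rightarrow> int) \<Rightarrow> 'a \<Rightarrow> int" where
  "fire V m f x = (if x \<in> V then - f x * valence V m x + (\<Sum>w\<in>V. f w * int (m w x)) else 0)"

definition lin_equiv :: "'a set \<Rightarrow> ('a \<Rightarrow> 'a \<Rightarrow> nat) \<Rightarrow> ('a \<Rightarrow> int) \<Rightarrow> ('a \<Rightarrow> int) \<Rightarrow> bool" where
  "lin_equiv V m D D' \<longleftrightarrow> (\<exists>f :: 'a \<Rightarrow> int. \<forall>x. D' x = D x + fire V m f x)"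

definition equiv_effective :: "'a set \<Rightarrow> ('a \<Rightarrow> 'a \<Rightarrow> nat) \<Rightarrow> ('a \<Rightarrow> int) \<Rightarrow> bool" where
  "equiv_effective V m D \<longleftrightarrow> (\<exists>E. effective V E \<and> lin_equiv V m D E)"

definition rank :: "'a set \<Rightarrow> ('a \<Rightarrow> 'a \<Rightarrow> nat) \<Rightarrow> ('a \<Rightarrow> int) \<Rightarrow> int" where
  "rank V m D = (if \<not> equiv_effective V m D then -1
     else int (GREATEST r :: nat. \<forall>E. effective V E \<and> deg V E = int r
                 \<longrightarrow> equiv_effective V m (\<lambda>x. D x - E x)))"

definition twist :: "('a \<Rightarrow> int) \<Rightarrow> 'a \<Rightarrow> int \<Rightarrow> 'a \<Rightarrow> int \<Rightarrow> 'a \<Rightarrow> int" where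
  "twist D u a v b = (\<lambda>x. D x + (if x = u then a else 0) + (if x = v then b else 0))"

definition Delta :: "'a set \<Rightarrow> ('a \<Rightarrow> 'a \<Rightarrow> nat) \<Rightarrow> 'a \<Rightarrow> 'a \<Rightarrow> ('a \<Rightarrow> int) \<Rightarrow> int" where
  "Delta V m u v D = rank V m D - rank V m (twist D u (-1) v 0)
      - rank V m (twist D u 0 v (-1)) + rank V m (twist D u (-1) v (-1))"

definition submodular :: "'a set \<Rightarrow> ('a \<Rightarrow> 'a \<Rightarrow> nat) \<Rightarrow> 'a \<Rightarrow> 'a \<Rightarrow> ('a \<Rightarrow> int) \<Rightarrow> bool" where
  "submodular V m u v D \<longleftrightarrow> (\<forall>a b. Delta V m u v (twist D u a v b) \<ge> 0)"

definition transmission :: "'a set \<Rightarrow> ('a \<Rightarrow> 'a \<Rightarrow> nat) \<Rightarrow> 'a \<Rightarrow> 'a \<Rightarrow> ('a \<Rightarrow> int) \<Rightarrow> int \<Rightarrow> int" where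
  "transmission V m u v D = (THE \<tau>. bij \<tau> \<and>
     (\<forall>a b. (if \<tau> b = a then 1 else 0) = Delta V m u v (twist D u a v (-b))))"

definition inversions :: "(int \<Rightarrow> int) \<Rightarrow> (int \<times> int) set" where
  "inversions \<tau> = {(a, b). a < b \<and> \<tau> a > \<tau> b}"

definition k_equiv :: "int \<Rightarrow> (int \<times> int) set \<Rightarrow> ((int \<times> int) \<times> (int \<times> int)) set" where
  "k_equiv k S = {((a, b), (a', b')). (a, b) \<in> S \<and> (a', b') \<in> S \<and>
                     a - a' = b - b' \<and> k dvd (a - a')}"

definition inv_k :: "int \<Rightarrow> (int \<Rightarrow> int) \<Rightarrow> enat" where
  "inv_k k \<tau> = (let C = inversions \<tau> // k_equiv k (inversions \<tau>) in
                  if finite C then enat (card C) else \<infinity>)"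

definition k_general_transmission ::
  "'a set \<Rightarrow> ('a \<Rightarrow> 'a \<Rightarrow> nat) \<Rightarrow> 'a \<Rightarrow> 'a \<Rightarrow> nat \<Rightarrow> bool" where
  "k_general_transmission V m u v k \<longleftrightarrow>
     lin_equiv V m (\<lambda>x. if x = u then int k else 0) (\<lambda>x. if x = v then int k else 0)
     \<and> (\<forall>D. is_divisor V D \<longrightarrow> submodular V m u v D)
     \<and> (\<forall>D. is_divisor V D \<longrightarrow>
          inv_k (int k) (transmission V m u v D) \<le> enat (nat (genus V m)))"

definition BN_general :: "'a set \<Rightarrow> ('a \<Rightarrow> 'a \<Rightarrow> nat) \<Rightarrow> bool" where
  "BN_general V m \<longleftrightarrow> (\<forall>D. is_divisor V D \<longrightarrow> (\<forall>r::int. 0 \<le> r \<and> r \<le> rank V m D \<longrightarrow>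
      genus V m - (r + 1) * (genus V m - deg V D + r) \<ge> 0))"

end

theory Submission
  imports Defs
begin
locale graphG =
  fixes V :: "'a set" and m :: "'a \<Rightarrow> 'a \<Rightarrow> nat"
  assumes gr: "is_graph V m"
begin

lemma finV: "finite V" using gr unfolding is_graph_def by auto
lemma Vne: "V \<noteq> {}" using gr unfolding is_graph_def by auto
lemma msym: "m x y = m y x" using gr unfolding is_graph_def by auto
lemma mxx: "m x x = 0" using gr unfolding is_graph_def by auto
lemma m_in: "m x y > 0 \<Longrightarrow> x \<in> V \<and> y \<in> V" using gr unfolding is_graph_def by auto
lemma conn: "x \<in> V \<Longrightarrow> y \<in> V \<Longrightarrow> (x, y) \<in> {(a, b). m a b > 0}\<^sup>*"
  using gr unfolding is_graph_def by auto

lemma fire_alt: "x \<in> V \<Longrightarrow> fire V m f x = (\<Sum>w\<in>V. int (m w x) * (f w - f x))"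
proof -
  assume x: "x \<in> V"
  have "fire V m f x = - f x * (\<Sum>y\<in>V. int (m x y)) + (\<Sum>w\<in>V. f w * int (m w x))"
    using x unfolding fire_def valence_def by simp
  also have "(\<Sum>y\<in>V. int (m x y)) = (\<Sum>w\<in>V. int (m w x))" using msym by simp
  also have "- f x * (\<Sum>w\<in>V. int (m w x)) + (\<Sum>w\<in>V. f w * int (m w x))
      = (\<Sum>w\<in>V. int (m w x) * (f w - f x))"
    by (simp add: sum_distrib_left sum.distrib[symmetric] algebra_simps sum_subtractf)
  finally show ?thesis .
qed

lemma fire_out: "x \<notin> V \<Longrightarrow> fire V m f x = 0" unfolding fire_def by simp

lemma fire_add: "fire V m (\<lambda>x. f x + h x) x = fire V m f x + fire V m h x"
  by (cases "x \<in> V") (simp_all add: fire_alt fire_out sum.distrib[symmetric] algebra_simps)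

lemma fire_scale: "fire V m (\<lambda>x. c * f x) x = c * fire V m f x"
  by (cases "x \<in> V") (simp_all add: fire_alt fire_out sum_distrib_left algebra_simps)

lemma fire_neg: "fire V m (\<lambda>x. - f x) x = - fire V m f x"
  using fire_scale[of "-1" f x] by simp

lemma fire_zero: "fire V m (\<lambda>x. 0) x = 0"
  using fire_scale[of 0 "\<lambda>x. 0" x] by simp

lemma fire_sum: "(\<Sum>x\<in>V. fire V m f x) = 0"
proof -
  have "(\<Sum>x\<in>V. fire V m f x) = (\<Sum>x\<in>V. \<Sum>w\<in>V. int (m w x) * f w) - (\<Sum>x\<in>V. \<Sum>w\<in>V. int (m w x) * f x)"
    by (simp add: fire_alt algebra_simps sum_subtractf)
  also have "(\<Sum>x\<in>V. \<Sum>w\<in>V. int (m w x) * f w) = (\<Sum>w\<in>V. \<Sum>x\<in>V. int (m w x) * f w)"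
    by (rule sum.swap)
  also have "\<dots> = (\<Sum>x\<in>V. \<Sum>w\<in>V. int (m w x) * f x)"
    using msym by simp
  finally show ?thesis by simp
qed

lemma le_refl: "lin_equiv V m D D"
  unfolding lin_equiv_def by (rule exI[of _ "\<lambda>x. 0"]) (simp add: fire_zero)

lemma le_sym: "lin_equiv V m D D' \<Longrightarrow> lin_equiv V m D' D"
  unfolding lin_equiv_def
proof -
  assume "\<exists>f. \<forall>x. D' x = D x + fire V m f x"
  then obtain f where f: "\<forall>x. D' x = D x + fire V m f x" by blast
  show "\<exists>f. \<forall>x. D x = D' x + fire V m f x"
    by (rule exI[of _ "\<lambda>x. - f x"]) (simp add: fire_neg f)
qed

lemma le_trans: "lin_equiv V m D D' \<Longrightarrow> lin_equiv V m D' D'' \<Longrightarrow> lin_equiv V m D D''"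
  unfolding lin_equiv_def
proof -
  assume "\<exists>f. \<forall>x. D' x = D x + fire V m f x" "\<exists>f. \<forall>x. D'' x = D' x + fire V m f x"
  then obtain f h where f: "\<forall>x. D' x = D x + fire V m f x" and h: "\<forall>x. D'' x = D' x + fire V m h x" by blast
  show "\<exists>f. \<forall>x. D'' x = D x + fire V m f x"
    by (rule exI[of _ "\<lambda>x. f x + h x"]) (simp add: fire_add f h)
qed

lemma le_add: "lin_equiv V m D D' \<Longrightarrow> lin_equiv V m (\<lambda>x. D x + H x) (\<lambda>x. D' x + H x)"
  unfolding lin_equiv_def by auto

lemma le_deg: "lin_equiv V m D D' \<Longrightarrow> deg V D' = deg V D"
  unfolding lin_equiv_def deg_def
proof -
  assume "\<exists>f. \<forall>x. D' x = D x + fire V m f x"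
  then obtain f where f: "\<forall>x. D' x = D x + fire V m f x" by blast
  show "sum D' V = sum D V" by (simp add: f sum.distrib fire_sum)
qed

lemma le_div: "lin_equiv V m D D' \<Longrightarrow> is_divisor V D \<Longrightarrow> is_divisor V D'"
  unfolding lin_equiv_def is_divisor_def using fire_out by auto

end

context graphG begin

abbreviation eqe where "eqe D \<equiv> equiv_effective V m D"
abbreviation rk where "rk D \<equiv> rank V m D"

definition Pr :: "('a \<Rightarrow> int) \<Rightarrow> nat \<Rightarrow> bool" where
  "Pr D n \<longleftrightarrow> (\<forall>E. effective V E \<and> deg V E = int n \<longrightarrow> equiv_effective V m (\<lambda>x. D x - E x))"

lemma eff_deg: "effective V E \<Longrightarrow> deg V E \<ge> 0"
  unfolding effective_def deg_def by (simp add: sum_nonneg)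

lemma eqe_deg: "eqe D \<Longrightarrow> deg V D \<ge> 0"
proof -
  assume "eqe D"
  then obtain E where "effective V E" "lin_equiv V m D E" unfolding equiv_effective_def by blast
  then show ?thesis using le_deg eff_deg by metis
qed

lemma eqe_cong: "lin_equiv V m D D' \<Longrightarrow> eqe D \<Longrightarrow> eqe D'"
  unfolding equiv_effective_def using le_sym le_trans by blast

lemma eqe_add: "eqe D \<Longrightarrow> effective V H \<Longrightarrow> eqe (\<lambda>x. D x + H x)"
proof -
  assume "eqe D" "effective V H"
  then obtain E where E: "effective V E" "lin_equiv V m D E" unfolding equiv_effective_def by blast
  have "effective V (\<lambda>x. E x + H x)" using E(1) \<open>effective V H\<close>
    unfolding effective_def is_divisor_def by auto
  moreover have "lin_equiv V m (\<lambda>x. D x + H x) (\<lambda>x. E x + H x)" using le_add E(2) by blast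
  ultimately show ?thesis unfolding equiv_effective_def by blast
qed

lemma eff_zero: "effective V E \<Longrightarrow> deg V E = 0 \<Longrightarrow> E x = 0"
proof -
  assume e: "effective V E" "deg V E = 0"
  have "\<forall>x\<in>V. E x = 0" using e finV unfolding effective_def deg_def
    using sum_nonneg_eq_0_iff by blast
  then show ?thesis using e unfolding effective_def is_divisor_def by (cases "x \<in> V") auto
qed

lemma Pr0: "eqe D \<Longrightarrow> Pr D 0"
  unfolding Pr_def
proof (intro allI impI)
  fix E assume "eqe D" "effective V E \<and> deg V E = int 0"
  then have "(\<lambda>x. D x - E x) = D" using eff_zero by auto
  then show "eqe (\<lambda>x. D x - E x)" using \<open>eqe D\<close> by simp
qed

definition pt :: "'a \<Rightarrow> int \<Rightarrow> 'a \<Rightarrow> int" where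
  "pt x0 c = (\<lambda>x. if x = x0 then c else 0)"

lemma pt_eff: "x0 \<in> V \<Longrightarrow> c \<ge> 0 \<Longrightarrow> effective V (pt x0 c)"
  unfolding effective_def is_divisor_def pt_def by auto

lemma pt_deg: "x0 \<in> V \<Longrightarrow> deg V (pt x0 c) = c"
  unfolding deg_def pt_def using finV by simp

lemma deg_diff: "deg V (\<lambda>x. D x - E x) = deg V D - deg V E"
  unfolding deg_def by (simp add: sum_subtractf)

lemma deg_add: "deg V (\<lambda>x. D x + E x) = deg V D + deg V E"
  unfolding deg_def by (simp add: sum.distrib)

lemma Pr_bound: "Pr D n \<Longrightarrow> int n \<le> deg V D"
proof -
  assume P: "Pr D n"
  obtain x0 where x0: "x0 \<in> V" using Vne by blast
  have "eqe (\<lambda>x. D x - pt x0 (int n) x)" using P pt_eff[OF x0] pt_deg[OF x0] unfolding Pr_def by simp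
  then have "deg V (\<lambda>x. D x - pt x0 (int n) x) \<ge> 0" by (rule eqe_deg)
  then show ?thesis using deg_diff pt_deg[OF x0] by simp
qed

lemma Pr_bound_nat: "Pr D y \<Longrightarrow> y \<le> nat (deg V D)"
proof -
  assume "Pr D y"
  then have "int y \<le> deg V D" by (rule Pr_bound)
  then show ?thesis by linarith
qed

lemma Pr_Suc: "Pr D (Suc n) \<Longrightarrow> Pr D n"
  unfolding Pr_def
proof (intro allI impI)
  fix E assume P: "\<forall>E. effective V E \<and> deg V E = int (Suc n) \<longrightarrow> eqe (\<lambda>x. D x - E x)"
    and E: "effective V E \<and> deg V E = int n"
  obtain x0 where x0: "x0 \<in> V" using Vne by blast
  let ?E = "\<lambda>x. E x + pt x0 1 x"
  have "effective V ?E" using E pt_eff[OF x0, of 1] unfolding effective_def is_divisor_def by auto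
  moreover have "deg V ?E = int (Suc n)" using E deg_add pt_deg[OF x0] by simp
  ultimately have "eqe (\<lambda>x. D x - ?E x)" using P by blast
  then have "eqe (\<lambda>x. (D x - ?E x) + pt x0 1 x)" by (rule eqe_add[OF _ pt_eff[OF x0]]) simp
  then show "eqe (\<lambda>x. D x - E x)" by simp
qed

lemma Pr_mono: "Pr D n \<Longrightarrow> n' \<le> n \<Longrightarrow> Pr D n'"
proof (induction n)
  case 0 then show ?case by simp
next
  case (Suc n)
  show ?case
  proof (cases "n' = Suc n")
    case True then show ?thesis using Suc.prems by simp
  next
    case False then have "n' \<le> n" using Suc.prems by simp
    then show ?thesis using Suc.IH Pr_Suc[OF Suc.prems(1)] by blast
  qed
qed

lemma rank_eqe: "eqe D \<Longrightarrow> rk D = int (GREATEST r. Pr D r)"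
  unfolding rank_def Pr_def by simp

lemma rank_not: "\<not> eqe D \<Longrightarrow> rk D = -1"
  unfolding rank_def by simp

lemma rank_Pr: "eqe D \<Longrightarrow> Pr D (nat (rk D))"
proof -
  assume e: "eqe D"
  have "Pr D (GREATEST r. Pr D r)"
    by (rule GreatestI_nat[of _ 0 "nat (deg V D)"]) (use Pr0[OF e] Pr_bound_nat in auto)
  then show ?thesis using rank_eqe[OF e] by simp
qed

lemma rank_ge_Pr: "eqe D \<Longrightarrow> Pr D n \<Longrightarrow> int n \<le> rk D"
proof -
  assume e: "eqe D" and P: "Pr D n"
  have "n \<le> (GREATEST r. Pr D r)"
    by (rule Greatest_le_nat[of _ n "nat (deg V D)"]) (use P Pr_bound_nat in auto)
  then show ?thesis using rank_eqe[OF e] by simp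
qed

lemma rank_ge_m1: "rk D \<ge> -1"
  by (cases "eqe D") (auto simp: rank_eqe rank_not)

lemma rank_nonneg_iff: "rk D \<ge> 0 \<longleftrightarrow> eqe D"
  by (cases "eqe D") (auto simp: rank_eqe rank_not)

lemma rank_ge_iff: "0 \<le> n \<Longrightarrow> (n \<le> rk D \<longleftrightarrow> eqe D \<and> Pr D (nat n))"
proof
  assume n: "0 \<le> n" and le: "n \<le> rk D"
  have "0 \<le> rk D" using n le by linarith
  then have e: "eqe D" using rank_nonneg_iff by blast
  have "Pr D (nat (rk D))" using rank_Pr[OF e] .
  moreover have "nat n \<le> nat (rk D)" using le by simp
  ultimately have "Pr D (nat n)" by (rule Pr_mono)
  then show "eqe D \<and> Pr D (nat n)" using e by simp
next
  assume "0 \<le> n" "eqe D \<and> Pr D (nat n)"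
  then show "n \<le> rk D" using rank_ge_Pr[of D "nat n"] by simp
qed

lemma rank_neg: "deg V D < 0 \<Longrightarrow> rk D = -1"
  by (meson eqe_deg not_le rank_not)

lemma rank_le_deg: "0 \<le> rk D \<Longrightarrow> rk D \<le> deg V D"
proof -
  assume "0 \<le> rk D"
  then have e: "eqe D" using rank_nonneg_iff by simp
  show ?thesis using Pr_bound[OF rank_Pr[OF e]] \<open>0 \<le> rk D\<close> by simp
qed

lemma rank_le_deg': "0 \<le> deg V D \<Longrightarrow> rk D \<le> deg V D"
proof (cases "0 \<le> rk D")
  case True then show ?thesis using rank_le_deg by blast
next
  case False then show "0 \<le> deg V D \<Longrightarrow> ?thesis" by simp
qed

lemma Pr_cong: "lin_equiv V m D D' \<Longrightarrow> Pr D n \<Longrightarrow> Pr D' n"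
  unfolding Pr_def
proof (intro allI impI)
  fix E assume l: "lin_equiv V m D D'" and P: "\<forall>E. effective V E \<and> deg V E = int n \<longrightarrow> eqe (\<lambda>x. D x - E x)"
    and E: "effective V E \<and> deg V E = int n"
  have "lin_equiv V m (\<lambda>x. D x + (- E x)) (\<lambda>x. D' x + (- E x))" by (rule le_add[OF l])
  then have "lin_equiv V m (\<lambda>x. D x - E x) (\<lambda>x. D' x - E x)" by simp
  then show "eqe (\<lambda>x. D' x - E x)" using P E eqe_cong by blast
qed

lemma rank_cong: "lin_equiv V m D D' \<Longrightarrow> rk D = rk D'"
proof -
  assume l: "lin_equiv V m D D'"
  have l2: "lin_equiv V m D' D" using le_sym[OF l] .
  have a: "\<And>A B n. lin_equiv V m A B \<Longrightarrow> 0 \<le> n \<Longrightarrow> n \<le> rk A \<Longrightarrow> n \<le> rk B"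
  proof -
    fix A B n assume l: "lin_equiv V m A B" and n: "0 \<le> n" "n \<le> rk A"
    then have "eqe A \<and> Pr A (nat n)" using rank_ge_iff[of n A] by blast
    then have "eqe B \<and> Pr B (nat n)" using eqe_cong[OF l] Pr_cong[OF l] by blast
    then show "n \<le> rk B" using rank_ge_iff[of n B] n by blast
  qed
  show ?thesis
  proof (cases "eqe D")
    case True
    then have "0 \<le> rk D" "0 \<le> rk D'" using rank_nonneg_iff eqe_cong[OF l] by auto
    then show ?thesis using a[OF l, of "rk D"] a[OF l2, of "rk D'"] by simp
  next
    case False
    then have "\<not> eqe D'" using eqe_cong[OF l2] by blast
    then show ?thesis using False rank_not by simp
  qed
qed

lemma rank_mono: "effective V H \<Longrightarrow> rk D \<le> rk (\<lambda>x. D x + H x)"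
proof (cases "rk D \<ge> 0")
  case True
  assume H: "effective V H"
  have e: "eqe D" using True rank_nonneg_iff by simp
  have P: "Pr D (nat (rk D))" using rank_Pr[OF e] .
  have "Pr (\<lambda>x. D x + H x) (nat (rk D))" using P unfolding Pr_def
  proof (intro allI impI)
    fix E assume P': "\<forall>E. effective V E \<and> deg V E = int (nat (rk D)) \<longrightarrow> eqe (\<lambda>x. D x - E x)"
      and E: "effective V E \<and> deg V E = int (nat (rk D))"
    have "eqe (\<lambda>x. D x - E x)" using P' E by blast
    then have "eqe (\<lambda>x. (D x - E x) + H x)" by (rule eqe_add[OF _ H])
    then show "eqe (\<lambda>x. D x + H x - E x)" by (simp add: algebra_simps)
  qed
  moreover have "eqe (\<lambda>x. D x + H x)" by (rule eqe_add[OF e H])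
  ultimately show ?thesis using rank_ge_iff[of "rk D" "\<lambda>x. D x + H x"] True by simp
next
  case False
  then show ?thesis using rank_ge_m1[of "\<lambda>x. D x + H x"] by simp
qed

lemma rank_step: "x0 \<in> V \<Longrightarrow> rk D \<le> rk (\<lambda>x. D x - pt x0 1 x) + 1"
proof (cases "rk D \<ge> 1")
  case True
  assume x0: "x0 \<in> V"
  have "0 \<le> rk D" using True by simp
  then have e: "eqe D" using rank_nonneg_iff by simp
  have P: "Pr D (nat (rk D))" using rank_Pr[OF e] .
  have P1: "Pr D 1" using Pr_mono[OF P] True by simp
  have "eqe (\<lambda>x. D x - pt x0 1 x)" using P1 pt_eff[OF x0, of 1] pt_deg[OF x0] unfolding Pr_def by simp
  moreover have "Pr (\<lambda>x. D x - pt x0 1 x) (nat (rk D - 1))" unfolding Pr_def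
  proof (intro allI impI)
    fix E assume E: "effective V E \<and> deg V E = int (nat (rk D - 1))"
    have "effective V (\<lambda>x. E x + pt x0 1 x)" using E pt_eff[OF x0, of 1]
      unfolding effective_def is_divisor_def by auto
    moreover have "deg V (\<lambda>x. E x + pt x0 1 x) = int (nat (rk D))" using E deg_add pt_deg[OF x0] True by simp
    ultimately have "eqe (\<lambda>x. D x - (E x + pt x0 1 x))" using P unfolding Pr_def by blast
    then show "eqe (\<lambda>x. D x - pt x0 1 x - E x)" by (simp add: algebra_simps)
  qed
  ultimately have "rk D - 1 \<le> rk (\<lambda>x. D x - pt x0 1 x)" using rank_ge_iff[of "rk D - 1" "\<lambda>x. D x - pt x0 1 x"] True by simp
  then show ?thesis by simp
next
  case False
  then show ?thesis using rank_ge_m1[of "\<lambda>x. D x - pt x0 1 x"] by simp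
qed

end

context graphG begin

definition Rl where "Rl = {(a, b). m a b > 0}"
definition dst :: "'a \<Rightarrow> 'a \<Rightarrow> nat" where "dst u x = (LEAST n. (u, x) \<in> Rl ^^ n)"

lemma dst_ex: "u \<in> V \<Longrightarrow> x \<in> V \<Longrightarrow> (u, x) \<in> Rl ^^ (dst u x)"
proof -
  assume "u \<in> V" "x \<in> V"
  then have "(u, x) \<in> Rl\<^sup>*" using conn unfolding Rl_def by blast
  then obtain n where "(u, x) \<in> Rl ^^ n" using rtrancl_power by blast
  then show ?thesis unfolding dst_def by (rule LeastI)
qed

lemma dst_parent: "u \<in> V \<Longrightarrow> x \<in> V \<Longrightarrow> x \<noteq> u \<Longrightarrow> \<exists>p\<in>V. m p x > 0 \<and> dst u p < dst u x"
proof -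
  assume u: "u \<in> V" and x: "x \<in> V" and xu: "x \<noteq> u"
  have h: "(u, x) \<in> Rl ^^ (dst u x)" by (rule dst_ex[OF u x])
  have "dst u x \<noteq> 0" using h xu by (cases "dst u x") auto
  then obtain n where n: "dst u x = Suc n" by (cases "dst u x") auto
  then have "(u, x) \<in> Rl ^^ Suc n" using h by simp
  then obtain p where p1: "(u, p) \<in> Rl ^^ n" and p2: "(p, x) \<in> Rl" by (rule relpow_Suc_E)
  have "dst u p \<le> n" using p1 unfolding dst_def by (rule Least_le)
  moreover have "m p x > 0" using p2 unfolding Rl_def by simp
  ultimately show ?thesis using m_in n by force
qed

definition C0 :: int where "C0 = (\<Sum>x\<in>V. valence V m x)"

lemma val_nonneg: "valence V m x \<ge> 0" unfolding valence_def by (simp add: sum_nonneg)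

lemma val_le_C0: "x \<in> V \<Longrightarrow> valence V m x \<le> C0"
  unfolding C0_def using finV val_nonneg by (metis member_le_sum)

lemma C0_nonneg: "C0 \<ge> 0" unfolding C0_def using val_nonneg by (simp add: sum_nonneg)

lemma potential: "u \<in> V \<Longrightarrow> \<exists>f. (\<forall>x. 0 \<le> f x \<and> f x \<le> f u) \<and> (\<forall>x\<in>V - {u}. fire V m f x \<ge> 1)"
proof -
  assume u: "u \<in> V"
  define Dm where "Dm = Max (dst u ` V)"
  define Mb :: nat where "Mb = nat C0 + 1"
  define f where "f x = int (Mb ^ (Dm - dst u x))" for x
  have Mb1: "Mb \<ge> 1" unfolding Mb_def by simp
  have f0: "0 \<le> f x" for x unfolding f_def by simp
  have fu: "f x \<le> f u" for x
  proof -
    have "dst u u = 0" unfolding dst_def by (rule Least_equality) auto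
    then show ?thesis unfolding f_def using Mb1 by (simp add: power_increasing)
  qed
  have g: "fire V m f x \<ge> 1" if x: "x \<in> V - {u}" for x
  proof -
    obtain p where p: "p \<in> V" "m p x > 0" "dst u p < dst u x" using dst_parent[OF u] x by blast
    have dxD: "dst u x \<le> Dm" unfolding Dm_def using x finV by simp
    have "Dm - dst u p \<ge> Suc (Dm - dst u x)" using p(3) dxD by simp
    then have "Mb ^ (Dm - dst u p) \<ge> Mb ^ Suc (Dm - dst u x)" using power_increasing[OF _ Mb1] by blast
    then have fp0: "int (Mb * Mb ^ (Dm - dst u x)) \<le> int (Mb ^ (Dm - dst u p))" by (simp only: of_nat_le_iff power_Suc)
    then have fp: "f p \<ge> int Mb * f x" unfolding f_def by (simp only: of_nat_mult)
    have "fire V m f x = (\<Sum>w\<in>V. int (m w x) * f w) - valence V m x * f x"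
      using x unfolding fire_def valence_def by (simp add: msym algebra_simps)
    moreover have "(\<Sum>w\<in>V. int (m w x) * f w) \<ge> int (m p x) * f p"
      using finV p(1) f0 by (intro member_le_sum) (auto intro: mult_nonneg_nonneg)
    moreover have "int (m p x) * f p \<ge> f p" using p(2) f0[of p] by (simp add: mult_le_cancel_right1)
    moreover have "valence V m x \<le> int Mb - 1" using val_le_C0[of x] x C0_nonneg unfolding Mb_def by simp
    moreover have "f x \<ge> 1" unfolding f_def using Mb1 by simp
    moreover have "valence V m x * f x \<le> (int Mb - 1) * f x"
      using \<open>valence V m x \<le> int Mb - 1\<close> f0[of x] by (rule mult_right_mono)
    ultimately have "fire V m f x \<ge> int Mb * f x - (int Mb - 1) * f x"
      using fp by linarith
    then show ?thesis using \<open>f x \<ge> 1\<close> by (simp add: algebra_simps)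
  qed
  show ?thesis using f0 fu g by blast
qed

lemma fire_pt: "x \<in> V \<Longrightarrow> fire V m (pt x 1) y = (if y \<in> V then int (m x y) - (if y = x then valence V m x else 0) else 0)"
proof -
  assume xV: "x \<in> V"
  have "(\<Sum>w\<in>V. pt x 1 w * int (m w y)) = (\<Sum>w\<in>V. if w = x then int (m x y) else 0)"
    by (intro sum.cong) (auto simp: pt_def msym)
  also have "\<dots> = int (m x y)" using xV finV by simp
  finally show ?thesis unfolding fire_def by (auto simp: pt_def)
qed

lemma reduce:
  assumes u: "u \<in> V" and G: "is_divisor V G"
  shows "\<exists>G'. lin_equiv V m G G' \<and> is_divisor V G' \<and> (\<forall>x\<in>V - {u}. 0 \<le> G' x \<and> G' x < valence V m x)"
proof -
  obtain f where f0: "\<forall>x. 0 \<le> f x \<and> f x \<le> f u" and fg: "\<forall>x\<in>V - {u}. fire V m f x \<ge> 1"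
    using potential[OF u] by blast
  define t where "t = (\<Sum>x\<in>V. \<bar>G x\<bar>)"
  define G1 where "G1 x = G x + fire V m (\<lambda>y. t * f y) x" for x
  have t0: "t \<ge> 0" unfolding t_def by (simp add: sum_nonneg)
  have Gt: "x \<in> V \<Longrightarrow> - t \<le> G x" for x
  proof -
    assume "x \<in> V"
    then have "\<bar>G x\<bar> \<le> t" unfolding t_def using finV by (metis abs_ge_zero member_le_sum)
    then show ?thesis by simp
  qed
  have l1: "lin_equiv V m G G1" unfolding lin_equiv_def G1_def by blast
  have c1: "\<forall>x\<in>V - {u}. 0 \<le> G1 x"
  proof
    fix x assume x: "x \<in> V - {u}"
    have "G1 x = G x + t * fire V m f x" unfolding G1_def by (simp add: fire_scale)
    moreover have "t * fire V m f x \<ge> t" using fg x t0 by (simp add: mult_le_cancel_left1)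
    ultimately show "0 \<le> G1 x" using Gt[of x] x by simp
  qed
  define Cands where "Cands = {G'. lin_equiv V m G G' \<and> is_divisor V G' \<and> (\<forall>x\<in>V - {u}. 0 \<le> G' x)}"
  define S where "S G' = (\<Sum>y\<in>V. (f u - f y) * G' y)" for G'
  have S0: "G' \<in> Cands \<Longrightarrow> S G' \<ge> 0" for G'
  proof -
    assume c: "G' \<in> Cands"
    show ?thesis unfolding S_def
    proof (intro sum_nonneg)
      fix y assume y: "y \<in> V"
      show "0 \<le> (f u - f y) * G' y"
      proof (cases "y = u")
        case False then have "0 \<le> G' y" using c y unfolding Cands_def by blast
        moreover have "0 \<le> f u - f y" using f0 by simp
        ultimately show ?thesis by simp
      qed simp
    qed
  qed
  have "G1 \<in> Cands" unfolding Cands_def using l1 c1 le_div[OF l1 G] by blast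
  then obtain G' where G': "G' \<in> Cands" and mn: "\<forall>H. H \<in> Cands \<longrightarrow> nat (S G') \<le> nat (S H)"
    using ex_has_least_nat[of "\<lambda>H. H \<in> Cands" G1 "\<lambda>H. nat (S H)"] by blast
  have "\<forall>x\<in>V - {u}. G' x < valence V m x"
  proof (rule ccontr)
    assume "\<not> (\<forall>x\<in>V - {u}. G' x < valence V m x)"
    then obtain x where x: "x \<in> V - {u}" and big: "G' x \<ge> valence V m x" by force
    define G'' where "G'' y = G' y + fire V m (pt x 1) y" for y
    have xV: "x \<in> V" using x by simp
    have l2: "lin_equiv V m G' G''" unfolding lin_equiv_def G''_def by blast
    have "lin_equiv V m G G'" using G' unfolding Cands_def by blast
    then have l3: "lin_equiv V m G G''" using le_trans l2 by blast
    have d3: "is_divisor V G''" using le_div[OF l2] G' unfolding Cands_def by blast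
    have nn: "\<forall>y\<in>V - {u}. 0 \<le> G'' y"
    proof
      fix y assume y: "y \<in> V - {u}"
      show "0 \<le> G'' y"
      proof (cases "y = x")
        case True then show ?thesis using big unfolding G''_def by (simp add: fire_pt[OF xV] xV mxx)
      next
        case False then show ?thesis using G' y unfolding G''_def Cands_def by (simp add: fire_pt[OF xV])
      qed
    qed
    have "G'' \<in> Cands" unfolding Cands_def using l3 d3 nn by blast
    have "S G'' = S G' + (\<Sum>y\<in>V. (f u - f y) * fire V m (pt x 1) y)"
      unfolding S_def G''_def by (simp add: distrib_left sum.distrib)
    also have "(\<Sum>y\<in>V. (f u - f y) * fire V m (pt x 1) y)
        = (\<Sum>y\<in>V. (f u - f y) * int (m x y) - (if y = x then (f u - f x) * valence V m x else 0))"
      by (intro sum.cong refl) (auto simp: fire_pt[OF xV] right_diff_distrib)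
    also have "\<dots> = (\<Sum>y\<in>V. (f u - f y) * int (m x y)) - (f u - f x) * valence V m x"
      using xV finV by (simp add: sum_subtractf)
    also have "\<dots> = (\<Sum>y\<in>V. (f u - f y) * int (m x y) - (f u - f x) * int (m x y))"
      unfolding valence_def by (simp add: sum_distrib_left sum_subtractf)
    also have "\<dots> = (\<Sum>y\<in>V. - (int (m y x) * (f y - f x)))"
      by (intro sum.cong refl) (simp add: msym[of x] algebra_simps)
    also have "\<dots> = - fire V m f x" using fire_alt[OF xV] by (simp add: sum_negf)
    finally have "S G'' = S G' + - fire V m f x" .
    moreover have "fire V m f x \<ge> 1" using fg x by blast
    ultimately have "S G'' \<le> S G' - 1" by linarith
    moreover have "S G'' \<ge> 0" using S0[OF \<open>G'' \<in> Cands\<close>] .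
    ultimately have "nat (S G'') < nat (S G')" by simp
    then show False using mn \<open>G'' \<in> Cands\<close> by (meson not_le)
  qed
  then show ?thesis using G' unfolding Cands_def by blast
qed

lemma H1: assumes G: "is_divisor V G" and dG: "deg V G \<ge> C0" shows "eqe G"
proof -
  obtain u where u: "u \<in> V" using Vne by blast
  obtain G' where l: "lin_equiv V m G G'" and d: "is_divisor V G'"
    and b: "\<forall>x\<in>V - {u}. 0 \<le> G' x \<and> G' x < valence V m x" using reduce[OF u G] by blast
  have "deg V G' = deg V G" using le_deg[OF l] .
  moreover have "deg V G' = G' u + (\<Sum>x\<in>V - {u}. G' x)"
    unfolding deg_def using finV u by (simp add: sum.remove)
  moreover have "(\<Sum>x\<in>V - {u}. G' x) \<le> (\<Sum>x\<in>V - {u}. valence V m x)"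
    using b by (intro sum_mono) (simp add: less_imp_le)
  moreover have "(\<Sum>x\<in>V - {u}. valence V m x) \<le> C0"
    unfolding C0_def using finV val_nonneg by (intro sum_mono2) auto
  ultimately have "G' u \<ge> 0" using dG by linarith
  then have "\<forall>x\<in>V. 0 \<le> G' x" using b by auto
  then have "effective V G'" using d unfolding effective_def by blast
  then show ?thesis using l unfolding equiv_effective_def by blast
qed

lemma div_diff: "is_divisor V A \<Longrightarrow> is_divisor V B \<Longrightarrow> is_divisor V (\<lambda>x. A x - B x)"
  unfolding is_divisor_def by simp

lemma rank_lower: assumes G: "is_divisor V G" shows "rk G \<ge> deg V G - C0"
proof (cases "deg V G - C0 \<ge> 0")
  case True
  have e: "eqe G" using H1[OF G] True by simp
  have "Pr G (nat (deg V G - C0))" unfolding Pr_def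
  proof (intro allI impI)
    fix E assume E: "effective V E \<and> deg V E = int (nat (deg V G - C0))"
    have "is_divisor V (\<lambda>x. G x - E x)" using G E div_diff unfolding effective_def by blast
    moreover have "deg V (\<lambda>x. G x - E x) \<ge> C0" using E True by (simp add: deg_diff)
    ultimately show "eqe (\<lambda>x. G x - E x)" by (rule H1)
  qed
  then show ?thesis using rank_ge_iff[of "deg V G - C0" G] e True by simp
next
  case False
  then show ?thesis using rank_ge_m1[of G] by simp
qed

lemma half_sum:
  fixes h :: "'a \<Rightarrow> nat"
  shows "2 * (\<Sum>x\<in>V. \<Sum>y\<in>V. if h y < h x then m x y else 0) \<le> (\<Sum>x\<in>V. \<Sum>y\<in>V. m x y)"
    and "inj_on h V \<Longrightarrow> 2 * (\<Sum>x\<in>V. \<Sum>y\<in>V. if h y < h x then m x y else 0) = (\<Sum>x\<in>V. \<Sum>y\<in>V. m x y)"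
proof -
  have sw: "(\<Sum>x\<in>V. \<Sum>y\<in>V. if h x < h y then m x y else 0) = (\<Sum>x\<in>V. \<Sum>y\<in>V. if h y < h x then m x y else 0)"
    by (subst sum.swap) (rule sum.cong[OF refl], rule sum.cong[OF refl], simp add: msym)
  have split: "(\<Sum>x\<in>V. \<Sum>y\<in>V. m x y) = (\<Sum>x\<in>V. \<Sum>y\<in>V. if h y < h x then m x y else 0)
     + (\<Sum>x\<in>V. \<Sum>y\<in>V. if h x < h y then m x y else 0) + (\<Sum>x\<in>V. \<Sum>y\<in>V. if h x = h y then m x y else 0)"
    by (simp add: sum.distrib[symmetric]) (intro sum.cong refl, auto)
  show "2 * (\<Sum>x\<in>V. \<Sum>y\<in>V. if h y < h x then m x y else 0) \<le> (\<Sum>x\<in>V. \<Sum>y\<in>V. m x y)"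
    using split sw by simp
  assume inj: "inj_on h V"
  have "(\<Sum>x\<in>V. \<Sum>y\<in>V. if h x = h y then m x y else 0) = 0"
    using inj by (intro sum.neutral ballI) (auto simp: inj_on_def mxx)
  then show "2 * (\<Sum>x\<in>V. \<Sum>y\<in>V. if h y < h x then m x y else 0) = (\<Sum>x\<in>V. \<Sum>y\<in>V. m x y)"
    using split sw by simp
qed

abbreviation gen where "gen \<equiv> genus V m"

lemma genus_nonneg: "gen \<ge> 0"
proof -
  obtain u where u: "u \<in> V" using Vne by blast
  let ?S = "(\<Sum>x\<in>V. \<Sum>y\<in>V. if dst u y < dst u x then m x y else 0)"
  have "?S \<ge> (\<Sum>x\<in>V. if x = u then 0 else 1)"
  proof (intro sum_mono)
    fix x assume x: "x \<in> V"
    show "(if x = u then 0 else 1) \<le> (\<Sum>y\<in>V. if dst u y < dst u x then m x y else 0)"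
    proof (cases "x = u")
      case False
      then obtain p where p: "p \<in> V" "m p x > 0" "dst u p < dst u x" using dst_parent[OF u x] by blast
      have "(if dst u p < dst u x then m x p else 0) \<le> (\<Sum>y\<in>V. if dst u y < dst u x then m x y else 0)"
        using finV p(1) by (intro member_le_sum) auto
      then show ?thesis using p False by (simp add: msym)
    qed simp
  qed
  moreover have "(\<Sum>x\<in>V. if x = u then 0 else (1::nat)) = card V - 1"
    using finV u by (simp add: sum.If_cases Diff_eq[symmetric] Int_absorb1 Diff_subset card_Diff_singleton)
  moreover have "2 * ?S \<le> (\<Sum>x\<in>V. \<Sum>y\<in>V. m x y)" by (rule half_sum(1))
  ultimately have "card V - 1 \<le> (\<Sum>x\<in>V. \<Sum>y\<in>V. m x y) div 2" by linarith
  moreover have "card V \<ge> 1" using finV Vne by (simp add: Suc_le_eq card_gt_0_iff)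
  ultimately show ?thesis unfolding genus_def num_edges_def by linarith
qed

lemma nu_exists: "\<exists>\<nu>. is_divisor V \<nu> \<and> deg V \<nu> = gen - 1 \<and> \<not> eqe \<nu>"
proof -
  obtain idx :: "'a \<Rightarrow> nat" and n where "idx ` V = {i. i < n}" and inj: "inj_on idx V"
    using finite_imp_inj_to_nat_seg[OF finV] by blast
  define \<nu> where "\<nu> x = (if x \<in> V then int (\<Sum>y\<in>V. if idx y < idx x then m x y else 0) - 1 else 0)" for x
  have div: "is_divisor V \<nu>" unfolding is_divisor_def \<nu>_def by simp
  have "deg V \<nu> = int (\<Sum>x\<in>V. \<Sum>y\<in>V. if idx y < idx x then m x y else 0) - int (card V)"
    unfolding deg_def \<nu>_def by (simp add: sum_subtractf)
  also have "(\<Sum>x\<in>V. \<Sum>y\<in>V. if idx y < idx x then m x y else 0) = (\<Sum>x\<in>V. \<Sum>y\<in>V. m x y) div 2"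
    using half_sum(2)[OF inj] by linarith
  finally have dg: "deg V \<nu> = gen - 1" unfolding genus_def num_edges_def by simp
  have ne: "\<not> eqe \<nu>"
  proof
    assume "eqe \<nu>"
    then obtain E f where E: "effective V E" and Ef: "\<forall>x. E x = \<nu> x + fire V m f x"
      unfolding equiv_effective_def lin_equiv_def by blast
    define Mx where "Mx = Max (f ` V)"
    define A where "A = {x\<in>V. f x = Mx}"
    have fle: "x \<in> V \<Longrightarrow> f x \<le> Mx" for x unfolding Mx_def using finV by simp
    have "Mx \<in> f ` V" unfolding Mx_def using finV Vne by simp
    then have "A \<noteq> {}" unfolding A_def by auto
    moreover have finA: "finite A" unfolding A_def using finV by simp
    ultimately have "Min (idx ` A) \<in> idx ` A" by simp
    then obtain x0 where x0: "x0 \<in> A" and x0m: "idx x0 = Min (idx ` A)" by auto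
    have mn: "\<forall>y\<in>A. idx x0 \<le> idx y" using x0m finA by simp
    have x0V: "x0 \<in> V" using x0 unfolding A_def by simp
    have "fire V m f x0 = (\<Sum>y\<in>V. int (m y x0) * (f y - f x0))" by (rule fire_alt[OF x0V])
    also have "\<dots> \<le> (\<Sum>y\<in>V. if idx y < idx x0 then - int (m x0 y) else 0)"
    proof (intro sum_mono)
      fix y assume y: "y \<in> V"
      have fx0: "f x0 = Mx" using x0 unfolding A_def by simp
      show "int (m y x0) * (f y - f x0) \<le> (if idx y < idx x0 then - int (m x0 y) else 0)"
      proof (cases "idx y < idx x0")
        case True
        then have "y \<notin> A" using mn by force
        then have "f y - f x0 \<le> -1" using fle[OF y] y fx0 unfolding A_def by simp
        then have "int (m y x0) * (f y - f x0) \<le> int (m y x0) * (-1)" by (intro mult_left_mono) auto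
        then show ?thesis using True by (simp add: msym)
      next
        case False
        have "f y - f x0 \<le> 0" using fle[OF y] fx0 by simp
        then show ?thesis using False by (simp add: mult_nonneg_nonpos)
      qed
    qed
    also have "\<dots> = - int (\<Sum>y\<in>V. if idx y < idx x0 then m x0 y else 0)"
      by (simp add: sum_negf[symmetric] of_nat_sum if_distrib cong: if_cong)
    finally have "E x0 \<le> -1" using Ef x0V unfolding \<nu>_def by simp
    then show False using E x0V unfolding effective_def by force
  qed
  show ?thesis using div dg ne by blast
qed

lemma rank_upper: assumes G: "is_divisor V G" and dG: "deg V G \<ge> C0 + gen - 1"
  shows "rk G \<le> deg V G - gen"
proof (rule ccontr)
  assume "\<not> rk G \<le> deg V G - gen"
  then have r: "deg V G - gen + 1 \<le> rk G" by simp
  obtain \<nu> where nd: "is_divisor V \<nu>" and ndg: "deg V \<nu> = gen - 1" and ne: "\<not> eqe \<nu>" using nu_exists by blast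
  define H where "H x = G x - \<nu> x" for x
  have Hd: "is_divisor V H" unfolding H_def using G nd div_diff by blast
  have Hdeg: "deg V H = deg V G - gen + 1" unfolding H_def using ndg by (simp add: deg_diff)
  have "eqe H" using H1[OF Hd] Hdeg dG by simp
  then obtain E where E: "effective V E" "lin_equiv V m H E" unfolding equiv_effective_def by blast
  have dE: "deg V E = deg V G - gen + 1" using le_deg[OF E(2)] Hdeg by simp
  have n0: "0 \<le> deg V G - gen + 1" using dG C0_nonneg by simp
  then have "Pr G (nat (deg V G - gen + 1))" using rank_ge_iff[of "deg V G - gen + 1" G] r by simp
  then have "eqe (\<lambda>x. G x - E x)" using E(1) dE n0 unfolding Pr_def by simp
  moreover have "lin_equiv V m (\<lambda>x. E x + (G x - E x - H x)) (\<lambda>x. H x + (G x - E x - H x))"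
    by (rule le_add[OF le_sym[OF E(2)]])
  then have "lin_equiv V m \<nu> (\<lambda>x. G x - E x)" unfolding H_def by simp
  ultimately show False using ne eqe_cong le_sym by blast
qed

end

definition dl :: "(int \<Rightarrow> int \<Rightarrow> int) \<Rightarrow> int \<Rightarrow> int \<Rightarrow> int" where
  "dl R a b = R a b - R (a - 1) b - R a (b + 1) + R (a - 1) (b + 1)"

locale rankfun =
  fixes R :: "int \<Rightarrow> int \<Rightarrow> int" and d k C :: int
  assumes p0: "-1 \<le> R a b"
    and p1: "d + a - b < 0 \<Longrightarrow> R a b = -1"
    and p2a: "0 \<le> R a b - R a (b + 1)" and p2b: "R a b - R a (b + 1) \<le> 1"
    and p3a: "0 \<le> R a b - R (a - 1) b" and p3b: "R a b - R (a - 1) b \<le> 1"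
    and p4: "0 \<le> dl R a b"
    and p5: "R (a + k) (b + k) = R a b"
    and p6: "d + a - b - C \<le> R a b"
    and p7: "0 \<le> d + a - b \<Longrightarrow> R a b \<le> d + a - b"
    and k1: "1 \<le> k"
begin

definition Gr where "Gr a b = R a b - R a (b + 1)"

lemma Gr01: "Gr a b = 0 \<or> Gr a b = 1" using p2a[of a b] p2b[of a b] unfolding Gr_def by auto

lemma Gr_le1: "Gr a b \<le> 1" using Gr01[of a b] by auto

lemma Gr_step: "Gr (a - 1) b \<le> Gr a b" using p4[of a b] unfolding Gr_def dl_def by simp

lemma Gr_mono_nat: "Gr a b \<le> Gr (a + int n) b"
proof (induction n)
  case (Suc n) then show ?case using Gr_step[of "a + int (Suc n)" b] by simp
qed simp

lemma Gr_mono: "a \<le> a' \<Longrightarrow> Gr a b \<le> Gr a' b"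
  using Gr_mono_nat[of a b "nat (a' - a)"] by simp

lemma Gr_low: "a < b - d \<Longrightarrow> Gr a b = 0" unfolding Gr_def using p1 by simp

lemma R_per_nat: "R (a + int n * k) (b + int n * k) = R a b"
proof (induction n)
  case (Suc n)
  have "R (a + int (Suc n) * k) (b + int (Suc n) * k) = R ((a + int n * k) + k) ((b + int n * k) + k)"
    by (simp add: algebra_simps)
  then show ?case using p5 Suc by simp
qed simp

lemma R_per: "R (a + j * k) (b + j * k) = R a b"
proof (cases "j \<ge> 0")
  case True then show ?thesis using R_per_nat[of a "nat j" b] by simp
next
  case False
  have "R ((a + j * k) + int (nat (- j)) * k) ((b + j * k) + int (nat (- j)) * k) = R (a + j * k) (b + j * k)"
    by (rule R_per_nat)
  then show ?thesis using False by (simp add: algebra_simps)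
qed

lemma Gr_per: "Gr (a + j * k) (b + j * k) = Gr a b"
  unfolding Gr_def using R_per[of a j b] R_per[of a j "b + 1"] by (simp add: algebra_simps)

lemma C_nonneg: "0 \<le> C"
  using p6[of 0 "d + 1"] p1[of 0 "d + 1"] by simp

lemma tele: "R a c - R a (c + int n) = (\<Sum>i\<in>{c..<c + int n}. Gr a i)"
proof (induction n)
  case (Suc n)
  have "{c..<c + int (Suc n)} = insert (c + int n) {c..<c + int n}" by auto
  then have "(\<Sum>i\<in>{c..<c + int (Suc n)}. Gr a i) = Gr a (c + int n) + (\<Sum>i\<in>{c..<c + int n}. Gr a i)"
    by simp
  then show ?case using Suc unfolding Gr_def by (simp add: algebra_simps)
qed simp

lemma row_ex: "\<exists>a. Gr a b0 = 1"
proof (rule ccontr)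
  assume "\<not> (\<exists>a. Gr a b0 = 1)"
  then have z0: "\<forall>a. Gr a b0 = 0" using Gr01 by blast
  have z: "Gr a i = 0" if "i mod k = b0 mod k" for a i
  proof -
    have "i = b0 + ((i - b0) div k) * k"
      using that by (metis add.commute diff_add_cancel mod_div_mult_eq mod_eq_dvd_iff dvd_div_mult_self)
    moreover have "Gr a (b0 + ((i - b0) div k) * k) = Gr (a - ((i - b0) div k) * k) b0"
      using Gr_per[of "a - ((i - b0) div k) * k" "(i - b0) div k" b0] by simp
    ultimately show ?thesis using z0 by metis
  qed
  have blk: "R a c - R a (c + k) \<le> k - 1" for a c
  proof -
    define i0 where "i0 = c + (b0 - c) mod k"
    have i0in: "i0 \<in> {c..<c + k}" unfolding i0_def using k1 by simp
    have "i0 mod k = b0 mod k" unfolding i0_def by (simp add: mod_add_right_eq)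
    then have gi0: "Gr a i0 = 0" by (rule z)
    have "R a c - R a (c + k) = (\<Sum>i\<in>{c..<c + k}. Gr a i)"
      using tele[of a c "nat k"] k1 by simp
    also have "\<dots> = Gr a i0 + (\<Sum>i\<in>{c..<c + k} - {i0}. Gr a i)"
      using i0in by (simp add: sum.remove)
    also have "\<dots> \<le> 0 + (\<Sum>i\<in>{c..<c + k} - {i0}. 1)"
      using gi0 by (intro add_mono sum_mono) (simp_all add: Gr_le1)
    also have "\<dots> = k - 1" using i0in k1 by (simp, arith)
    finally show ?thesis .
  qed
  have tot: "R a 0 - R a (int J * k) \<le> int J * (k - 1)" for a J
  proof (induction J)
    case (Suc J)
    have "R a (int J * k) - R a (int J * k + k) \<le> k - 1" by (rule blk)
    then show ?case using Suc by (simp add: algebra_simps)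
  qed simp
  define J where "J = nat C + 1"
  define a where "a = int J * k - d"
  have "R a 0 \<ge> int J * k - C" using p6[of a 0] unfolding a_def by simp
  moreover have "R a (int J * k) \<le> 0" using p7[of a "int J * k"] unfolding a_def by simp
  ultimately have "int J * k - C \<le> int J * (k - 1)" using tot[of a J] by simp
  then have "int J \<le> C" by (simp add: algebra_simps)
  then show False unfolding J_def using C_nonneg by simp
qed

definition tau where "tau b = (b - d) + int (LEAST n. Gr (b - d + int n) b = 1)"

lemma tau_spec: "Gr a b = 1 \<longleftrightarrow> tau b \<le> a"
proof -
  obtain a0 where a0: "Gr a0 b = 1" using row_ex by blast
  have "a0 \<ge> b - d" using a0 Gr_low[of a0 b] by (cases "a0 < b - d") auto
  then have ex: "Gr (b - d + int (nat (a0 - (b - d)))) b = 1" using a0 by simp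
  have t1: "Gr (tau b) b = 1" unfolding tau_def using LeastI[of "\<lambda>n. Gr (b - d + int n) b = 1", OF ex] .
  show ?thesis
  proof
    assume g: "Gr a b = 1"
    show "tau b \<le> a"
    proof (rule ccontr)
      assume "\<not> tau b \<le> a"
      then have lt: "a < tau b" by simp
      show False
      proof (cases "a < b - d")
        case True then show False using Gr_low g by simp
      next
        case False
        then have "nat (a - (b - d)) < (LEAST n. Gr (b - d + int n) b = 1)" using lt unfolding tau_def by simp
        then have "Gr (b - d + int (nat (a - (b - d)))) b \<noteq> 1" by (rule not_less_Least)
        then show False using g False by simp
      qed
    qed
  next
    assume "tau b \<le> a"
    then have "Gr (tau b) b \<le> Gr a b" by (rule Gr_mono)
    then show "Gr a b = 1" using t1 Gr01[of a b] by simp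
  qed
qed

lemma Gr_tau: "Gr a b = (if tau b \<le> a then 1 else 0)"
  using tau_spec[of a b] Gr01[of a b] by auto

lemma dl_tau: "dl R a b = (if a = tau b then 1 else 0)"
proof -
  have "dl R a b = Gr a b - Gr (a - 1) b" unfolding dl_def Gr_def by simp
  then show ?thesis using Gr_tau[of a b] Gr_tau[of "a - 1" b] by auto
qed

lemma row_unique: "dl R a b = 1 \<longleftrightarrow> a = tau b"
  using dl_tau by simp

lemma tau_per: "tau (b + j * k) = tau b + j * k"
proof -
  have "\<forall>a. (tau (b + j * k) \<le> a) = (tau b + j * k \<le> a)"
  proof
    fix a
    have "(tau (b + j * k) \<le> a) = (Gr a (b + j * k) = 1)" using tau_spec by simp
    also have "Gr a (b + j * k) = Gr (a - j * k) b" using Gr_per[of "a - j * k" j b] by simp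
    also have "(Gr (a - j * k) b = 1) = (tau b \<le> a - j * k)" using tau_spec by simp
    finally show "(tau (b + j * k) \<le> a) = (tau b + j * k \<le> a)" by (simp add: le_diff_eq)
  qed
  then show ?thesis by (metis order_refl order_antisym)
qed

lemma rank_formula: "R N 0 + 1 = int (card {b. 0 \<le> b \<and> tau b \<le> N})"
proof -
  define n where "n = nat (d + N + 1)"
  have Rn: "R N (int n) = -1" using p1[of N "int n"] unfolding n_def by simp
  have "R N 0 - R N (0 + int n) = (\<Sum>i\<in>{0..<0 + int n}. Gr N i)" by (rule tele)
  also have "\<dots> = (\<Sum>i\<in>{0..<int n}. if tau i \<le> N then 1 else 0)" using Gr_tau by simp
  also have "\<dots> = int (card ({0..<int n} \<inter> {i. tau i \<le> N}))"
    by (simp add: sum.If_cases)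
  also have "{0..<int n} \<inter> {i. tau i \<le> N} = {b. 0 \<le> b \<and> tau b \<le> N}"
  proof (intro set_eqI iffI)
    fix b assume "b \<in> {b. 0 \<le> b \<and> tau b \<le> N}"
    then have b: "0 \<le> b" "tau b \<le> N" by auto
    then have "Gr N b = 1" using tau_spec by simp
    then have "R N b \<ge> 0" unfolding Gr_def using p0[of N "b + 1"] by simp
    then have "\<not> d + N - b < 0" using p1[of N b] by auto
    then show "b \<in> {0..<int n} \<inter> {i. tau i \<le> N}" using b unfolding n_def by auto
  qed auto
  finally show ?thesis using Rn by simp
qed

end

lemma rankfun_swap: "rankfun R d k C \<Longrightarrow> rankfun (\<lambda>a b. R (- b) (- a)) d k C"
proof -
  assume rf: "rankfun R d k C"
  interpret rankfun R d k C by (rule rf)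
  show ?thesis
  proof
    fix a b
    show "-1 \<le> R (- b) (- a)" by (rule p0)
    show "d + a - b < 0 \<Longrightarrow> R (- b) (- a) = -1" using p1[of "-b" "-a"] by simp
    show "0 \<le> R (- b) (- a) - R (- (b + 1)) (- a)" using p3a[of "-b" "-a"] by simp
    show "R (- b) (- a) - R (- (b + 1)) (- a) \<le> 1" using p3b[of "-b" "-a"] by simp
    show "0 \<le> R (- b) (- a) - R (- b) (- (a - 1))" using p2a[of "-b" "-a"] by simp
    show "R (- b) (- a) - R (- b) (- (a - 1)) \<le> 1" using p2b[of "-b" "-a"] by simp
    show "0 \<le> dl (\<lambda>a b. R (- b) (- a)) a b" using p4[of "-b" "-a"] unfolding dl_def by simp
    show "R (- (b + k)) (- (a + k)) = R (- b) (- a)" using R_per[of "-b" "-1" "-a"] by (simp add: algebra_simps)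
    show "d + a - b - C \<le> R (- b) (- a)" using p6[of "-b" "-a"] by simp
    show "0 \<le> d + a - b \<Longrightarrow> R (- b) (- a) \<le> d + a - b" using p7[of "-b" "-a"] by simp
    show "1 \<le> k" by (rule k1)
  qed
qed

context rankfun begin

lemma col_ex: "\<exists>b. dl R a b = 1"
proof -
  interpret sw: rankfun "\<lambda>a b. R (- b) (- a)" d k C by (rule rankfun_swap) (rule rankfun_axioms)
  have "dl (\<lambda>a b. R (- b) (- a)) (sw.tau (- a)) (- a) = 1" using sw.row_unique by simp
  then have "dl R a (- sw.tau (- a)) = 1" unfolding dl_def by (simp add: algebra_simps)
  then show ?thesis by blast
qed

lemma col_unique: "dl R a b = 1 \<Longrightarrow> dl R a b' = 1 \<Longrightarrow> b = b'"
proof -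
  interpret sw: rankfun "\<lambda>a b. R (- b) (- a)" d k C by (rule rankfun_swap) (rule rankfun_axioms)
  have e: "dl R a b = dl (\<lambda>a b. R (- b) (- a)) (- b) (- a)" for a b unfolding dl_def by (simp add: algebra_simps)
  assume "dl R a b = 1" "dl R a b' = 1"
  then have "- b = sw.tau (- a)" "- b' = sw.tau (- a)" using e sw.row_unique by auto
  then show "b = b'" by simp
qed

lemma tau_bij: "bij tau"
proof (rule bijI)
  show "inj tau"
  proof (rule injI)
    fix b1 b2 assume "tau b1 = tau b2"
    then have "dl R (tau b1) b1 = 1" "dl R (tau b1) b2 = 1" using row_unique by auto
    then show "b1 = b2" by (rule col_unique)
  qed
  have "\<exists>b. a = tau b" for a
  proof -
    obtain b where "dl R a b = 1" using col_ex by blast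
    then show ?thesis using row_unique by blast
  qed
  then show "surj tau" unfolding surj_def by blast
qed

end

lemma dvd_small: "(k::int) dvd x \<Longrightarrow> \<bar>x\<bar> < k \<Longrightarrow> x = 0"
proof (rule ccontr)
  assume "k dvd x" "\<bar>x\<bar> < k" "x \<noteq> 0"
  then have "\<bar>k\<bar> \<le> \<bar>x\<bar>" using dvd_imp_le_int by blast
  then show False using \<open>\<bar>x\<bar> < k\<close> by simp
qed

definition ee :: "(int \<Rightarrow> int) \<Rightarrow> int \<Rightarrow> int \<Rightarrow> int \<Rightarrow> int \<times> int \<Rightarrow> int \<times> int" where
  "ee tau k X y = (\<lambda>(z, j). if z = y then (X, y + j * k) else
       (if j = 1 then (if tau z + k < tau X then (X, z + k) else (z - k, y))
        else (if tau z + 2 * k < tau X then (X, z + 2 * k) else if tau z + k < tau X then (z - k, y) else (z - 2 * k, y))))"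

lemma ee_inj:
  fixes X y k :: int
  assumes X0: "0 \<le> X" "X < k" and y0: "0 \<le> y" "y < k" and Xy: "X \<noteq> y"
  shows "inj_on (ee tau k X y) (({0..<k} - {X, y}) \<times> {1, 2} \<union> {y} \<times> {1, 2, 3})"
proof (rule inj_onI)
  fix i i' assume ii: "i \<in> ({0..<k} - {X, y}) \<times> {1, 2} \<union> {y} \<times> {1, 2, 3}"
    "i' \<in> ({0..<k} - {X, y}) \<times> {1, 2} \<union> {y} \<times> {1, 2, 3}" and e: "ee tau k X y i = ee tau k X y i'"
  obtain z j where i: "i = (z, j)" by (cases i)
  obtain z' j' where i': "i' = (z', j')" by (cases i')
  have A: "(z = y \<and> (j = 1 \<or> j = 2 \<or> j = 3)) \<or> (0 \<le> z \<and> z < k \<and> z \<noteq> X \<and> z \<noteq> y \<and> (j = 1 \<or> j = 2))"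
    using ii(1) i by auto
  have B: "(z' = y \<and> (j' = 1 \<or> j' = 2 \<or> j' = 3)) \<or> (0 \<le> z' \<and> z' < k \<and> z' \<noteq> X \<and> z' \<noteq> y \<and> (j' = 1 \<or> j' = 2))"
    using ii(2) i' by auto
  from A B e show "i = i'" unfolding i i' ee_def using X0 y0
    by (elim disjE conjE) (simp_all split: if_splits)
qed
lemma ee_inv:
  fixes X y k :: int
  assumes X0: "0 \<le> X" "X < k" and y0: "0 \<le> y" "y < k" and k1: "1 \<le> k"
    and tXb: "tau X \<ge> 2 * k + 1" and tyb: "tau y \<le> - k"
    and pz: "\<And>z. tau (z + k) = tau z + k" "\<And>z. tau (z + 2 * k) = tau z + 2 * k"
      "\<And>z. tau (z - k) = tau z - k" "\<And>z. tau (z - 2 * k) = tau z - 2 * k"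
      "\<And>z. tau (z + 3 * k) = tau z + 3 * k"
    and i: "i \<in> ({0..<k} - {X, y}) \<times> {1, 2} \<union> {y} \<times> {1, 2, 3}"
  shows "ee tau k X y i \<in> inversions tau"
proof -
  obtain z j where iz: "i = (z, j)" by (cases i)
  have A: "(z = y \<and> (j = 1 \<or> j = 2 \<or> j = 3)) \<or> (0 \<le> z \<and> z < k \<and> z \<noteq> X \<and> z \<noteq> y \<and> (j = 1 \<or> j = 2))"
    using i iz by auto
  from A show ?thesis unfolding iz ee_def inversions_def using X0 y0 k1 tXb tyb pz[of z] pz[of y]
    by (elim disjE conjE) (simp_all split: if_splits)
qed

lemma ee_shape:
  fixes X y k :: int
  assumes i: "i \<in> ({0..<k} - {X, y}) \<times> {1, 2} \<union> {y} \<times> {1, 2, 3}"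
  shows "fst (ee tau k X y i) = X \<or> (snd (ee tau k X y i) = y \<and> (\<exists>z\<in>{0..<k} - {X, y}. \<exists>j\<in>{1::int, 2}. fst (ee tau k X y i) = z - j * k))"
proof -
  obtain z j where iz: "i = (z, j)" by (cases i)
  have A: "(z = y \<and> (j = 1 \<or> j = 2 \<or> j = 3)) \<or> (z \<in> {0..<k} - {X, y} \<and> (j = 1 \<or> j = 2))"
    using i iz by auto
  from A show ?thesis unfolding iz ee_def
    by (elim disjE conjE) (auto split: if_splits)
qed
locale perm =
  fixes tau :: "int \<Rightarrow> int" and k :: int
  assumes bj: "bij tau" and k1: "1 \<le> k" and per: "tau (b + j * k) = tau b + j * k"
begin

definition PP where "PP N = {b. 0 \<le> b \<and> tau b \<le> N}"
definition QQ where "QQ N = {b. b < 0 \<and> N < tau b}"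

lemma per1: "tau (b + k) = tau b + k" using per[of b 1] by simp
lemma perm1: "tau (b - k) = tau b - k" using per[of b "-1"] by simp

lemma disp: "\<exists>K. \<forall>b. \<bar>tau b - b\<bar> \<le> K"
proof -
  define K where "K = Max ((\<lambda>r. \<bar>tau r - r\<bar>) ` {0..<k})"
  have "\<bar>tau b - b\<bar> \<le> K" for b
  proof -
    have "b = b mod k + (b div k) * k" by simp
    have "tau (b mod k + (b div k) * k) = tau (b mod k) + (b div k) * k" by (rule per)
    then have "tau b = tau (b mod k) + (b div k) * k" by simp
    then have "tau b - b = tau (b mod k) - b mod k" by (simp add: algebra_simps)
    moreover have "b mod k \<in> {0..<k}" using k1 by simp
    ultimately show ?thesis unfolding K_def by simp
  qed
  then show ?thesis by blast
qed

lemma fin_PP: "finite (PP N)"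
proof -
  obtain K where K: "\<forall>b. \<bar>tau b - b\<bar> \<le> K" using disp by blast
  have "PP N \<subseteq> {0..N + K}"
  proof
    fix b assume "b \<in> PP N"
    moreover have "\<bar>tau b - b\<bar> \<le> K" using K by blast
    ultimately show "b \<in> {0..N + K}" unfolding PP_def by (auto simp: abs_le_iff)
  qed
  then show ?thesis using finite_subset by blast
qed

lemma fin_QQ: "finite (QQ N)"
proof -
  obtain K where K: "\<forall>b. \<bar>tau b - b\<bar> \<le> K" using disp by blast
  have "QQ N \<subseteq> {N - K..0}"
  proof
    fix b assume "b \<in> QQ N"
    moreover have "\<bar>tau b - b\<bar> \<le> K" using K by blast
    ultimately show "b \<in> {N - K..0}" unfolding QQ_def by (auto simp: abs_le_iff)
  qed
  then show ?thesis using finite_subset by blast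
qed

lemma QQ_empty: "\<exists>K. \<forall>N\<ge>K. QQ N = {}"
proof -
  obtain K where K: "\<forall>b. \<bar>tau b - b\<bar> \<le> K" using disp by blast
  have "QQ N = {}" if "N \<ge> K" for N
  proof -
    have "\<not> (b < 0 \<and> N < tau b)" for b
    proof -
      have "\<bar>tau b - b\<bar> \<le> K" using K by blast
      then show ?thesis using that by (auto simp: abs_le_iff)
    qed
    then show ?thesis unfolding QQ_def by auto
  qed
  then show ?thesis by blast
qed

lemma flux_step: "int (card (PP (N + 1))) - int (card (QQ (N + 1))) = int (card (PP N)) - int (card (QQ N)) + 1"
proof -
  obtain b0 where b0: "tau b0 = N + 1" using bj by (metis bij_pointE)
  have uniq: "tau b = N + 1 \<longleftrightarrow> b = b0" for b using b0 bj by (metis bij_pointE)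
  show ?thesis
  proof (cases "0 \<le> b0")
    case True
    have "PP (N + 1) = insert b0 (PP N)" unfolding PP_def using True uniq b0 by force
    moreover have "b0 \<notin> PP N" unfolding PP_def using b0 by simp
    moreover have "QQ (N + 1) = QQ N" unfolding QQ_def
    proof (intro Collect_cong conj_cong refl)
      fix b :: int assume "b < 0"
      then have "tau b \<noteq> N + 1" using uniq True by auto
      then show "(N + 1 < tau b) = (N < tau b)" by auto
    qed
    ultimately show ?thesis using fin_PP by simp
  next
    case False
    have "PP (N + 1) = PP N" unfolding PP_def using False uniq by force
    moreover have "QQ N = insert b0 (QQ (N + 1))" unfolding QQ_def using False uniq b0 by force
    moreover have "b0 \<notin> QQ (N + 1)" unfolding QQ_def using b0 by simp
    ultimately show ?thesis using fin_QQ by simp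
  qed
qed

lemma flux: "int (card (PP (int n))) - int (card (QQ (int n))) = int (card (PP 0)) - int (card (QQ 0)) + int n"
proof (induction n)
  case (Suc n)
  have e: "int (Suc n) = int n + 1" by simp
  show ?case unfolding e using flux_step[of "int n"] Suc.IH by linarith
qed simp

abbreviation Inv where "Inv \<equiv> inversions tau"
abbreviation Rel where "Rel \<equiv> k_equiv k (inversions tau)"

lemma rel_D: "(p, p') \<in> Rel \<Longrightarrow> fst p - fst p' = snd p - snd p' \<and> k dvd (fst p - fst p')"
  unfolding k_equiv_def by auto

lemma inj_cls:
  assumes fin: "finite (Inv // Rel)" and S: "S \<subseteq> Inv"
    and ne: "\<And>p p'. p \<in> S \<Longrightarrow> p' \<in> S \<Longrightarrow> (p, p') \<in> Rel \<Longrightarrow> p = p'"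
  shows "card S \<le> card (Inv // Rel)"
proof -
  let ?f = "\<lambda>p. Rel `` {p}"
  have "?f ` S \<subseteq> Inv // Rel" using S by (auto intro: quotientI)
  moreover have "inj_on ?f S"
  proof (rule inj_onI)
    fix p p' assume p: "p \<in> S" "p' \<in> S" and e: "Rel `` {p} = Rel `` {p'}"
    have "(p', p') \<in> Rel" using p S unfolding k_equiv_def by auto
    then have "p' \<in> Rel `` {p}" using e by simp
    then have "(p, p') \<in> Rel" by simp
    then show "p = p'" using ne p by blast
  qed
  ultimately show ?thesis using fin by (metis card_inj_on_le)
qed

theorem comb:
  assumes fin: "finite (Inv // Rel)" and cG: "int (card (Inv // Rel)) \<le> G" and Gk: "G + 2 \<le> 2 * k"
  shows "int (card (PP 0) * card (QQ 0)) \<le> G"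
proof -
  let ?P = "PP 0" and ?Q = "QQ 0"
  have invPQ: "(q, p) \<in> Inv" if "q \<in> ?Q" "p \<in> ?P" for q p
    using that unfolding PP_def QQ_def inversions_def by auto
  show ?thesis
  proof (cases "?P \<subseteq> {0..<k} \<or> ?Q \<subseteq> {-k..<0}")
    case True
    have "card (?Q \<times> ?P) \<le> card (Inv // Rel)"
    proof (rule inj_cls[OF fin])
      show "?Q \<times> ?P \<subseteq> Inv" using invPQ by auto
      fix p p' assume p: "p \<in> ?Q \<times> ?P" "p' \<in> ?Q \<times> ?P" and r: "(p, p') \<in> Rel"
      obtain q1 p1 q2 p2 where pp: "p = (q1, p1)" "p' = (q2, p2)" by (cases p, cases p')
      have e: "q1 - q2 = p1 - p2" "k dvd (q1 - q2)" using rel_D[OF r] pp by auto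
      have "q1 - q2 = 0"
      proof (cases "?P \<subseteq> {0..<k}")
        case True
        then have "p1 \<in> {0..<k}" "p2 \<in> {0..<k}" using p pp by auto
        then have "\<bar>q1 - q2\<bar> < k" using e by auto
        then show ?thesis using e dvd_small[of k "q1 - q2"] by simp
      next
        case False
        then have "?Q \<subseteq> {-k..<0}" using \<open>?P \<subseteq> {0..<k} \<or> ?Q \<subseteq> {-k..<0}\<close> by blast
        then have "q1 \<in> {-k..<0}" "q2 \<in> {-k..<0}" using p pp by auto
        then have "\<bar>q1 - q2\<bar> < k" by auto
        then show ?thesis using e dvd_small[of k "q1 - q2"] by simp
      qed
      then show "p = p'" using e pp by simp
    qed
    then have "card ?P * card ?Q \<le> card (Inv // Rel)"
      by (simp add: card_cartesian_product mult.commute)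
    then have h: "int (card ?P * card ?Q) \<le> int (card (Inv // Rel))" by (simp only: of_nat_le_iff)
    then show ?thesis using cG by linarith
  next
    case False
    then have nP: "\<not> ?P \<subseteq> {0..<k}" and nQ: "\<not> ?Q \<subseteq> {-k..<0}" by auto
    from nP obtain p where p1: "p \<in> ?P" "p \<notin> {0..<k}" by blast
    from nQ obtain q where q1: "q \<in> ?Q" "q \<notin> {-k..<0}" by blast
    have p: "p \<in> ?P" "\<not> p < k" using p1 unfolding PP_def by auto
    have q: "q \<in> ?Q" "\<not> - k \<le> q" using q1 unfolding QQ_def by auto
    define X where "X = q mod k"
    define y where "y = p mod k"
    have X0: "0 \<le> X" "X < k" unfolding X_def using k1 by auto
    have y0: "0 \<le> y" "y < k" unfolding y_def using k1 by auto
    have "q + (- (q div k)) * k = q mod k" using minus_div_mult_eq_mod[of q k] by simp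
    then have "tau X = tau (q + (- (q div k)) * k)" unfolding X_def by simp
    then have tX: "tau X = tau q - (q div k) * k" using per[of q "- (q div k)"] by simp
    have "(q div k) * k = q - X" unfolding X_def by (simp add: minus_mod_eq_div_mult)
    then have "(q div k) * k < - k" using q X0 by simp
    then have "q div k < -1"
    proof -
      assume lt: "(q div k) * k < - k"
      show ?thesis
      proof (rule ccontr)
        assume "\<not> q div k < -1"
        then have "-1 * k \<le> (q div k) * k" using k1 by (intro mult_right_mono) auto
        then show False using lt by simp
      qed
    qed
    then have "(q div k) * k \<le> -2 * k" using k1 by (intro mult_right_mono) auto
    then have tXb: "tau X \<ge> 2 * k + 1" using tX q unfolding QQ_def by simp
    have "p + (- (p div k)) * k = p mod k" using minus_div_mult_eq_mod[of p k] by simp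
    then have "tau y = tau (p + (- (p div k)) * k)" unfolding y_def by simp
    then have ty: "tau y = tau p - (p div k) * k" using per[of p "- (p div k)"] by simp
    have "(p div k) * k = p - y" unfolding y_def by (simp add: minus_mod_eq_div_mult)
    then have "(p div k) * k > 0" using p y0 by simp
    then have "p div k > 0" using k1 by (simp add: zero_less_mult_iff)
    then have "1 * k \<le> (p div k) * k" using k1 by (intro mult_right_mono) auto
    then have "(p div k) * k \<ge> k" by simp
    then have tyb: "tau y \<le> - k" using ty p unfolding PP_def by simp
    have Xy: "X \<noteq> y" using tXb tyb k1 by auto
    define W where "W = {0..<k} - {X, y}"
    define Ix where "Ix = (W \<times> {1::int, 2}) \<union> ({y} \<times> {1, 2, 3})"
    define e where "e = ee tau k X y"
    have IxW: "Ix = (({0..<k} - {X, y}) \<times> {1, 2} \<union> {y} \<times> {1, 2, 3})" unfolding Ix_def W_def by simp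
    have pz: "tau (z + k) = tau z + k" "tau (z + 2 * k) = tau z + 2 * k"
      "tau (z - k) = tau z - k" "tau (z - 2 * k) = tau z - 2 * k"
      "tau (z + 3 * k) = tau z + 3 * k" for z
      using per[of z 1] per[of z 2] per[of z "-1"] per[of z "-2"] per[of z 3] by (simp_all add: algebra_simps)
    have einv: "e i \<in> Inv" if "i \<in> Ix" for i
      unfolding e_def by (rule ee_inv[OF X0 y0 k1 tXb tyb pz]) (use that IxW in simp)
    have eshape: "fst (e i) = X \<or> (snd (e i) = y \<and> (\<exists>z\<in>W. \<exists>j\<in>{1::int, 2}. fst (e i) = z - j * k))" if "i \<in> Ix" for i
      unfolding e_def W_def by (rule ee_shape) (use that IxW in simp)
    have einj: "inj_on e Ix" unfolding e_def IxW by (rule ee_inj[OF X0 y0 Xy])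
    have ne: "p = p'" if "p \<in> e ` Ix" "p' \<in> e ` Ix" "(p, p') \<in> Rel" for p p'
    proof -
      have r: "fst p - fst p' = snd p - snd p'" "k dvd (fst p - fst p')" using rel_D[OF that(3)] by auto
      have sp: "fst p = X \<or> (snd p = y \<and> (\<exists>z\<in>W. \<exists>j\<in>{1::int, 2}. fst p = z - j * k))" using eshape that(1) by auto
      have sp': "fst p' = X \<or> (snd p' = y \<and> (\<exists>z\<in>W. \<exists>j\<in>{1::int, 2}. fst p' = z - j * k))" using eshape that(2) by auto
      have cross: False if "fst a = X" "snd b = y" "z \<in> W" "j \<in> {1::int, 2}" "fst b = z - j * k"
        "k dvd (fst a - fst b) \<or> k dvd (fst b - fst a)" for a b z j
      proof -
        have w1: "fst a - fst b = X - z + j * k" using that by simp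
        have w2: "fst b - fst a = - (X - z + j * k)" using that by simp
        have "k dvd (X - z + j * k)" using that(6) unfolding w1 w2 by (metis dvd_minus_iff)
        then have "k dvd (X - z)" by (metis dvd_add_times_triv_right_iff)
        moreover have "\<bar>X - z\<bar> < k" using that(3) X0 unfolding W_def by auto
        ultimately have "X = z" using dvd_small by fastforce
        then show False using that(3) unfolding W_def by simp
      qed
      show ?thesis
      proof (cases "fst p = fst p'")
        case True then show ?thesis using r by (simp add: prod_eq_iff)
      next
        case False
        show ?thesis
        proof (cases "snd p = snd p'")
          case True then show ?thesis using r by (simp add: prod_eq_iff)
        next
          case False2: False
          show ?thesis
          proof (cases "fst p = X")
            case True
            then have "snd p' = y" "\<exists>z\<in>W. \<exists>j\<in>{1::int, 2}. fst p' = z - j * k" using sp' False by auto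
            then show ?thesis using cross[of p p'] True r by blast
          next
            case FX: False
            then have "snd p = y" "\<exists>z\<in>W. \<exists>j\<in>{1::int, 2}. fst p = z - j * k" using sp by auto
            moreover have "fst p' = X" using sp' False2 \<open>snd p = y\<close> by auto
            ultimately show ?thesis using cross[of p' p] r by blast
          qed
        qed
      qed
    qed
    have "card (e ` Ix) \<le> card (Inv // Rel)"
      by (rule inj_cls[OF fin]) (use einv ne in auto)
    moreover have "card (e ` Ix) = card Ix" using einj by (rule card_image)
    moreover have "card Ix = 2 * card W + 3"
    proof -
      have "W \<inter> {y} = {}" unfolding W_def by auto
      then have "(W \<times> {1::int, 2}) \<inter> ({y} \<times> {1, 2, 3}) = {}" by auto
      moreover have "finite W" unfolding W_def by simp
      ultimately show ?thesis unfolding Ix_def by (simp add: card_Un_disjoint card_cartesian_product)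
    qed
    moreover have "int (card W) = k - 2"
    proof -
      have "{X, y} \<subseteq> {0..<k}" using X0 y0 by auto
      then have "card W = card {0..<k} - card {X, y}" unfolding W_def by (simp add: card_Diff_subset)
      then show ?thesis using Xy k1 X0 y0 by simp
    qed
    ultimately have "2 * k - 1 \<le> int (card (Inv // Rel))" by linarith
    then show ?thesis using cG Gk by linarith
  qed
qed

end

lemma twist_twist: "twist (twist D u a v b) u a' v b' = twist D u (a + a') v (b + b')"
  unfolding twist_def by (auto simp: fun_eq_iff)

lemma twist_0: "twist D u 0 v 0 = D" unfolding twist_def by simp

context graphG begin

lemma twist_div: "u \<in> V \<Longrightarrow> v \<in> V \<Longrightarrow> is_divisor V D \<Longrightarrow> is_divisor V (twist D u a v b)"
  unfolding is_divisor_def twist_def by auto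

lemma twist_deg: "u \<in> V \<Longrightarrow> v \<in> V \<Longrightarrow> deg V (twist D u a v b) = deg V D + a + b"
  unfolding deg_def twist_def using finV by (simp add: sum.distrib)

lemma twist_v: "twist D u a v (b - 1) = (\<lambda>x. twist D u a v b x - pt v 1 x)"
  unfolding twist_def pt_def by (auto simp: fun_eq_iff)

lemma twist_u: "twist D u (a - 1) v b = (\<lambda>x. twist D u a v b x - pt u 1 x)"
  unfolding twist_def pt_def by (auto simp: fun_eq_iff)

lemma rank_drop: "x0 \<in> V \<Longrightarrow> 0 \<le> rk T - rk (\<lambda>x. T x - pt x0 1 x) \<and> rk T - rk (\<lambda>x. T x - pt x0 1 x) \<le> 1"
proof -
  assume x0: "x0 \<in> V"
  have "rk (\<lambda>x. T x - pt x0 1 x) \<le> rk (\<lambda>x. (T x - pt x0 1 x) + pt x0 1 x)"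
    by (rule rank_mono[OF pt_eff[OF x0]]) simp
  then have "rk (\<lambda>x. T x - pt x0 1 x) \<le> rk T" by simp
  moreover have "rk T \<le> rk (\<lambda>x. T x - pt x0 1 x) + 1" by (rule rank_step[OF x0])
  ultimately show ?thesis by simp
qed

end

theorem main_proof:
  fixes V :: "'a set" and m :: "'a \<Rightarrow> 'a \<Rightarrow> nat" and u v :: 'a and k :: nat
  assumes gr: "is_graph V m"
    and uV: "u \<in> V" and vV: "v \<in> V" and uv: "u \<noteq> v"
    and kg: "k_general_transmission V m u v k"
    and kb: "real k \<ge> real_of_int (genus V m) / 2 + 1"
  shows "BN_general V m"
proof -
  interpret graphG V m by (rule graphG.intro[OF gr])
  have g0: "gen \<ge> 0" by (rule genus_nonneg)
  have "real_of_int (2 * int k) \<ge> real_of_int (gen + 2)" using kb by simp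
  then have gk: "gen + 2 \<le> 2 * int k" by linarith
  then have k1: "1 \<le> int k" using g0 by simp
  have lek: "lin_equiv V m (\<lambda>x. if x = u then int k else 0) (\<lambda>x. if x = v then int k else 0)"
    and sm: "\<And>D. is_divisor V D \<Longrightarrow> submodular V m u v D"
    and ik: "\<And>D. is_divisor V D \<Longrightarrow> inv_k (int k) (transmission V m u v D) \<le> enat (nat gen)"
    using kg unfolding k_general_transmission_def by auto
  show ?thesis unfolding BN_general_def
  proof (intro allI impI)
    fix D r assume D: "is_divisor V D" and r: "0 \<le> r \<and> r \<le> rk D"
    define d where "d = deg V D"
    define R where "R a b = rk (twist D u a v (- b))" for a b
    have Rdeg: "deg V (twist D u a v (- b)) = d + a - b" for a b using twist_deg[OF uV vV] unfolding d_def by simp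
    have Rdiv: "is_divisor V (twist D u a v (- b))" for a b by (rule twist_div[OF uV vV D])
    have rf: "rankfun R d (int k) C0"
    proof
      fix a b
      show "-1 \<le> R a b" unfolding R_def by (rule rank_ge_m1)
      show "d + a - b < 0 \<Longrightarrow> R a b = -1" unfolding R_def using Rdeg rank_neg by simp
      have e1: "twist D u a v (- (b + 1)) = (\<lambda>x. twist D u a v (- b) x - pt v 1 x)"
        using twist_v[of D u a v "- b"] by simp
      show "0 \<le> R a b - R a (b + 1)" "R a b - R a (b + 1) \<le> 1"
        unfolding R_def e1 using rank_drop[OF vV] by auto
      have e2: "twist D u (a - 1) v (- b) = (\<lambda>x. twist D u a v (- b) x - pt u 1 x)" by (rule twist_u)
      show "0 \<le> R a b - R (a - 1) b" "R a b - R (a - 1) b \<le> 1"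
        unfolding R_def e2 using rank_drop[OF uV] by auto
      have "0 \<le> Delta V m u v (twist D u a v (- b))" using sm[OF D] unfolding submodular_def by blast
      then show "0 \<le> dl R a b" unfolding Delta_def dl_def R_def twist_twist by (simp add: algebra_simps)
      have "lin_equiv V m (\<lambda>x. (if x = v then int k else 0) + twist D u a v (- b - int k) x)
                          (\<lambda>x. (if x = u then int k else 0) + twist D u a v (- b - int k) x)"
        by (rule le_add[OF le_sym[OF lek]])
      moreover have "(\<lambda>x. (if x = v then int k else 0) + twist D u a v (- b - int k) x) = twist D u a v (- b)"
        unfolding twist_def by (auto simp: fun_eq_iff)
      moreover have "(\<lambda>x. (if x = u then int k else 0) + twist D u a v (- b - int k) x) = twist D u (a + int k) v (- (b + int k))"
        unfolding twist_def by (auto simp: fun_eq_iff)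
      ultimately show "R (a + int k) (b + int k) = R a b" unfolding R_def using rank_cong by metis
      show "d + a - b - C0 \<le> R a b" unfolding R_def using rank_lower[OF Rdiv] Rdeg by simp
      show "0 \<le> d + a - b \<Longrightarrow> R a b \<le> d + a - b" unfolding R_def using rank_le_deg'[of "twist D u a v (- b)"] Rdeg[of a b] by simp
      show "1 \<le> int k" by (rule k1)
    qed
    interpret rf: rankfun R d "int k" C0 by (rule rf)
    have trans: "transmission V m u v D = rf.tau"
      unfolding transmission_def
    proof (rule the_equality)
      have "Delta V m u v (twist D u a v (- b)) = dl R a b" for a b
        unfolding Delta_def dl_def R_def twist_twist by (simp add: algebra_simps)
      then show "bij rf.tau \<and> (\<forall>a b. (if rf.tau b = a then 1 else 0) = Delta V m u v (twist D u a v (- b)))"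
        using rf.tau_bij rf.dl_tau by auto
    next
      fix \<tau> assume h: "bij \<tau> \<and> (\<forall>a b. (if \<tau> b = a then 1 else 0) = Delta V m u v (twist D u a v (- b)))"
      have "Delta V m u v (twist D u a v (- b)) = dl R a b" for a b
        unfolding Delta_def dl_def R_def twist_twist by (simp add: algebra_simps)
      then have "dl R (\<tau> b) b = 1" for b using h by metis
      then show "\<tau> = rf.tau" using rf.row_unique by (auto simp: fun_eq_iff)
    qed
    interpret pm: perm rf.tau "int k"
      by (rule perm.intro) (use rf.tau_bij k1 rf.tau_per in auto)
    let ?C = "inversions rf.tau // k_equiv (int k) (inversions rf.tau)"
    have "inv_k (int k) rf.tau \<le> enat (nat gen)" using ik[OF D] trans by simp
    then have finC: "finite ?C" and cC: "card ?C \<le> nat gen" unfolding inv_k_def Let_def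
      by (auto split: if_splits)
    have comb: "int (card (pm.PP 0) * card (pm.QQ 0)) \<le> gen"
      by (rule pm.comb[OF finC]) (use cC g0 gk in auto)
    have rkD: "rk D + 1 = int (card (pm.PP 0))"
      using rf.rank_formula[of 0] unfolding R_def pm.PP_def by (simp add: twist_0)
    obtain K where K: "\<forall>N\<ge>K. pm.QQ N = {}" using pm.QQ_empty by blast
    define n where "n = nat (max K (C0 + gen - 1 - d))"
    have fl: "int (card (pm.PP (int n))) - int (card (pm.QQ (int n))) = int (card (pm.PP 0)) - int (card (pm.QQ 0)) + int n"
      by (rule pm.flux)
    have "pm.QQ (int n) = {}" using K unfolding n_def by simp
    moreover have "R (int n) 0 + 1 = int (card (pm.PP (int n)))"
      using rf.rank_formula[of "int n"] unfolding pm.PP_def by simp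
    moreover have "R (int n) 0 \<le> d + int n - gen"
    proof -
      have nge: "int n \<ge> C0 + gen - 1 - d" unfolding n_def by linarith
      have "deg V (twist D u (int n) v (- 0)) \<ge> C0 + gen - 1" using Rdeg[of "int n" 0] nge by simp
      then show ?thesis unfolding R_def using rank_upper[OF Rdiv[of "int n" 0]] Rdeg[of "int n" 0] by simp
    qed
    ultimately have Qb: "int (card (pm.QQ 0)) \<ge> rk D + gen - d" using fl rkD by linarith
    show "gen - (r + 1) * (gen - deg V D + r) \<ge> 0"
    proof (cases "gen - d + r \<le> 0")
      case True
      then have "(r + 1) * (gen - d + r) \<le> 0" using r by (simp add: mult_nonneg_nonpos)
      then show ?thesis using g0 unfolding d_def by simp
    next
      case False
      have "(r + 1) * (gen - d + r) \<le> (rk D + 1) * (gen - d + rk D)"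
        using r False by (intro mult_mono) auto
      also have "\<dots> \<le> int (card (pm.PP 0)) * int (card (pm.QQ 0))"
        using rkD Qb r False by (intro mult_mono) auto
      also have "\<dots> \<le> gen" using comb by simp
      finally show ?thesis unfolding d_def by simp
    qed
  qed
qed

theorem mainTheorem8:
  fixes V :: "'a set" and m :: "'a \<Rightarrow> 'a \<Rightarrow> nat" and u v :: 'a and k :: nat
  assumes "is_graph V m"
    and "u \<in> V" and "v \<in> V" and "u \<noteq> v"
    and "k_general_transmission V m u v k"
    and "real k \<ge> real_of_int (genus V m) / 2 + 1"
  shows "BN_general V m"
  using assms by (rule main_proof)

end
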